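(* Let $B>0$ and $0<C<\sqrt{2}\,B$. On $\ell^2(\mathbb{N}_0)$ with standard orthonormal basis $(e_k)_{k\ge 0}$, let $H$ be the bounded self-adjoint Jacobi operator with zero diagonal and off-diagonal entries $(C,B,B,\dots)$, i.e. $$H e_0=C e_1,\qquad H e_1=C e_0+B e_2,\qquad H e_k=B e_{k-1}+B e_{k+1}\ (k\ge 2).$$ Let $P=\sum_{k=0}^{\infty}\big(e_{2k}e_{2k}^\dagger-e_{2k+1}e_{2k+1}^\dagger\big)$, i.e. $Pe_k=(-1)^k e_k$. Fix a finite index $j\ge 0$ and let $\psi(t)=e^{-iHt}e_j$. Then $$\lim_{t\to+\infty}\langle P(t)\rangle=\lim_{t\to+\infty}\langle\psi(t),P\psi(t)\rangle=0 .$$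
   Context: Units with $\hbar=1$; $\langle P(t)\rangle$ is the expectation value of the parity-like operator $P$ (the "even-odd difference") in the time-evolved state $e^{-iHt}e_j$. *)

theory Defs
  imports "HOL-Analysis.Analysis"
begin

definition jac_entry :: "real \<Rightarrow> real \<Rightarrow> nat \<Rightarrow> nat \<Rightarrow> real" where
  "jac_entry B C k l =
     (if k = Suc l \<or> l = Suc k then (if min k l = 0 then C else B) else 0)"

definition jac_apply :: "real \<Rightarrow> real \<Rightarrow> (nat \<Rightarrow> complex) \<Rightarrow> nat \<Rightarrow> complex" where
  "jac_apply B C v k =
     (if k = 0 then 0 else complex_of_real (jac_entry B C k (k - 1)) * v (k - 1))
     + complex_of_real (jac_entry B C k (Suc k)) * v (Suc k)"

definition basis_vec :: "nat \<Rightarrow> nat \<Rightarrow> complex" where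
  "basis_vec j k = (if k = j then 1 else 0)"

text \<open>psi(t) = exp(-iHt) e_j, via the (norm-convergent) exponential series of the
  bounded operator H, read coordinatewise: psi(t)_k = sum_n (-it)^n/n! (H^n e_j)_k.\<close>
definition psi :: "real \<Rightarrow> real \<Rightarrow> nat \<Rightarrow> real \<Rightarrow> nat \<Rightarrow> complex" where
  "psi B C j t k =
     (\<Sum>n. ((- \<i> * complex_of_real t) ^ n / of_nat (fact n)) *
           ((jac_apply B C ^^ n) (basis_vec j) k))"

definition parity_expect :: "real \<Rightarrow> real \<Rightarrow> nat \<Rightarrow> real \<Rightarrow> real" where
  "parity_expect B C j t = (\<Sum>k. (-1) ^ k * (cmod (psi B C j t k))\<^sup>2)"

end

theory Submission
  imports Defs "HOL-Complex_Analysis.Complex_Analysis"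
begin

lemma jac_entry_sym: "jac_entry B C k l = jac_entry B C l k"
  unfolding jac_entry_def by (auto simp: min.commute)

lemma jac_entry_nz: "jac_entry B C k l \<noteq> 0 \<Longrightarrow> k = Suc l \<or> l = Suc k"
  unfolding jac_entry_def by (auto split: if_splits)

lemma jac_sum:
  fixes u :: "nat \<Rightarrow> 'a::real_algebra_1"
  shows "(\<Sum>l<N. of_real (jac_entry B C k l) * u l) =
    (if 0<k \<and> k-1<N then of_real (jac_entry B C k (k-1)) * u (k-1) else 0) +
    (if k+1<N then of_real (jac_entry B C k (k+1)) * u (k+1) else 0)"
proof -
  let ?h = "\<lambda>l. of_real (jac_entry B C k l) * u l"
  let ?A = "{..<N} \<inter> ({k+1} \<union> (if 0<k then {k-1} else {}))"
  have "(\<Sum>l<N. ?h l) = (\<Sum>l\<in>?A. ?h l)"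
    by (rule sum.mono_neutral_right) (auto simp: jac_entry_def split: if_splits)
  also have "\<dots> = (if 0<k \<and> k-1<N then ?h (k-1) else 0) + (if k+1<N then ?h (k+1) else 0)"
    by (cases "k = 0"; cases "k+1 < N"; cases "k - 1 < N") (auto simp: insert_commute Int_insert_left)
  finally show ?thesis .
qed


definition vv :: "real \<Rightarrow> real \<Rightarrow> nat \<Rightarrow> nat \<Rightarrow> nat \<Rightarrow> complex" where
  "vv B C j n = (jac_apply B C ^^ n) (basis_vec j)"

lemma vv_0: "vv B C j 0 = basis_vec j" by (simp add: vv_def)
lemma vv_Suc: "vv B C j (Suc n) = jac_apply B C (vv B C j n)" by (simp add: vv_def)

lemma jac_apply_sum:
  assumes "\<forall>l\<ge>N. u l = 0"
  shows "jac_apply B C u k = (\<Sum>l<N. of_real (jac_entry B C k l) * u l)"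
  unfolding jac_sum using assms by (auto simp: jac_apply_def)

lemma jac_apply_sum2:
  assumes "k + 2 \<le> N"
  shows "jac_apply B C u k = (\<Sum>l<N. of_real (jac_entry B C k l) * u l)"
  unfolding jac_sum using assms by (auto simp: jac_apply_def)

lemma vv_supp: "j + n < k \<Longrightarrow> vv B C j n k = 0"
proof (induction n arbitrary: k)
  case 0 then show ?case by (simp add: vv_0 basis_vec_def)
next
  case (Suc n)
  then show ?case by (auto simp: vv_Suc jac_apply_def)
qed

lemma vv_real: "cnj (vv B C j n k) = vv B C j n k"
proof (induction n arbitrary: k)
  case 0 then show ?case by (simp add: vv_0 basis_vec_def)
next
  case (Suc n)
  then show ?case by (simp add: vv_Suc jac_apply_def)
qed

lemma jac_entry_bound: "B > 0 \<Longrightarrow> C > 0 \<Longrightarrow> \<bar>jac_entry B C k l\<bar> \<le> max B C"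
  unfolding jac_entry_def by auto

lemma vv_bound:
  assumes "B > 0" "C > 0"
  shows "norm (vv B C j n k) \<le> (2 * max B C) ^ n"
proof (induction n arbitrary: k)
  case 0 then show ?case by (simp add: vv_0 basis_vec_def)
next
  case (Suc n)
  let ?M = "max B C"
  have a: "norm (of_real (jac_entry B C k l) * vv B C j n l) \<le> ?M * (2 * ?M) ^ n" for l
    unfolding norm_mult norm_of_real
    by (rule mult_mono) (use jac_entry_bound[OF assms] Suc.IH assms in \<open>auto simp: le_max_iff_disj\<close>)
  have "norm (vv B C j (Suc n) k) \<le>
      norm (if k = 0 then 0 else of_real (jac_entry B C k (k - 1)) * vv B C j n (k - 1))
      + norm (of_real (jac_entry B C k (Suc k)) * vv B C j n (Suc k))"
    unfolding vv_Suc jac_apply_def by (rule norm_triangle_ineq)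
  also have "\<dots> \<le> ?M * (2 * ?M) ^ n + ?M * (2 * ?M) ^ n"
    apply (rule add_mono)
    using a assms by (auto intro: mult_nonneg_nonneg)
  also have "\<dots> = (2 * ?M) ^ Suc n" by simp
  finally show ?case .
qed

lemma P_anti:
  fixes u w :: "nat \<Rightarrow> complex"
  assumes u: "\<forall>l. K \<le> Suc l \<longrightarrow> u l = 0" and w: "\<forall>l. K \<le> Suc l \<longrightarrow> w l = 0"
  shows "(\<Sum>k<K. (-1)^k * jac_apply B C u k * w k) = - (\<Sum>k<K. (-1)^k * u k * jac_apply B C w k)"
proof -
  have u': "\<forall>l\<ge>K. u l = 0" and w': "\<forall>l\<ge>K. w l = 0" using u w by auto
  have sg: "((-1)^k * of_real (jac_entry B C k l)) * u l * w k = - ((-1)^l * u l * (of_real (jac_entry B C l k) * w k))" for k l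
  proof (cases "jac_entry B C k l = 0")
    case True then show ?thesis by (simp add: jac_entry_sym[of B C k l])
  next
    case False
    then have "k = Suc l \<or> l = Suc k" by (rule jac_entry_nz)
    then show ?thesis by (auto simp: jac_entry_sym[of B C k l])
  qed
  have "(\<Sum>k<K. (-1)^k * jac_apply B C u k * w k)
      = (\<Sum>k<K. \<Sum>l<K. ((-1)^k * of_real (jac_entry B C k l)) * u l * w k)"
    by (simp add: jac_apply_sum[OF u'] sum_distrib_left sum_distrib_right mult.assoc)
  also have "\<dots> = (\<Sum>l<K. \<Sum>k<K. ((-1)^k * of_real (jac_entry B C k l)) * u l * w k)"
    by (rule sum.swap)
  also have "\<dots> = (\<Sum>l<K. \<Sum>k<K. - ((-1)^l * u l * (of_real (jac_entry B C l k) * w k)))"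
    by (intro sum.cong refl) (rule sg)
  also have "\<dots> = - (\<Sum>k<K. (-1)^k * u k * jac_apply B C w k)"
    by (simp add: jac_apply_sum[OF w'] sum_distrib_left sum_negf)
  finally show ?thesis .
qed

lemma P_inner:
  assumes "j + n + m + 2 \<le> K"
  shows "(\<Sum>k<K. (-1)^k * vv B C j n k * vv B C j m k) = (-1)^(n+j) * vv B C j (n+m) j"
  using assms
proof (induction n arbitrary: m)
  case 0
  have "(\<Sum>k<K. (-1)^k * basis_vec j k * vv B C j m k) = (\<Sum>k\<in>{j}. (-1)^k * basis_vec j k * vv B C j m k)"
    by (rule sum.mono_neutral_right) (use 0 in \<open>auto simp: basis_vec_def\<close>)
  then show ?case by (simp add: vv_0 basis_vec_def)
next
  case (Suc n)
  have "(\<Sum>k<K. (-1)^k * vv B C j (Suc n) k * vv B C j m k)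
     = - (\<Sum>k<K. (-1)^k * vv B C j n k * vv B C j (Suc m) k)"
    unfolding vv_Suc
    by (rule P_anti) (use Suc.prems in \<open>auto intro!: vv_supp\<close>)
  also have "\<dots> = - ((-1)^(n+j) * vv B C j (n + Suc m) j)"
    using Suc.IH[of "Suc m"] Suc.prems by simp
  finally show ?case by simp
qed


lemma sin_rec: "sin (a - x) + sin (a + x) = 2 * cos x * sin (a::real)"
  by (simp add: sin_add sin_diff)


lemma mean_value_circle:
  fixes F :: "complex \<Rightarrow> complex"
  assumes holF: "F holomorphic_on cball 0 1"
  shows "((\<lambda>\<theta>. F (cis \<theta>)) has_integral (2 * pi * F 0)) {0..2*pi}"
proof -
  have "((\<lambda>u. F u / (u - 0)) has_contour_integral (2 * of_real pi * \<i> * F 0)) (circlepath 0 1)"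
    by (rule Cauchy_integral_circlepath_simple) (use holF in auto)
  then have h1: "((\<lambda>x. F (exp (2 * of_real pi * \<i> * of_real x)) / exp (2 * of_real pi * \<i> * of_real x)
        * (2 * pi * \<i> * 1 * exp (2 * of_real pi * \<i> * x))) has_integral (2 * of_real pi * \<i> * F 0)) {0..1}"
    unfolding has_contour_integral vector_derivative_circlepath by (simp add: circlepath)
  have eq: "F (exp (2 * of_real pi * \<i> * of_real x)) / exp (2 * of_real pi * \<i> * of_real x)
        * (2 * pi * \<i> * 1 * exp (2 * of_real pi * \<i> * x)) = (2 * of_real pi * \<i>) * F (cis (2 * pi * x))" for x :: real
    by (simp add: cis_conv_exp mult_ac)
  have h2: "((\<lambda>x. (2 * of_real pi * \<i>) * F (cis (2 * pi * x))) has_integral (2 * of_real pi * \<i>) * F 0) {0..1}"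
    using h1 unfolding eq .
  then have "((\<lambda>x. F (cis (2 * pi * x))) has_integral F 0) {0..1}"
  proof -
    from has_integral_mult_right[OF h2, of "1 / (2 * of_real pi * \<i>)"]
    show ?thesis by (simp add: field_simps)
  qed
  from has_integral_affinity[OF this[unfolded box_real(2)[symmetric]], of "1 / (2*pi)" 0]
  have "((\<lambda>x. F (cis (2 * pi * ((1 / (2 * pi)) * x)))) has_integral (2 * pi) *\<^sub>R F 0)
           ((\<lambda>x. (2*pi) * x) ` cbox 0 1)"
    by simp
  moreover have "(\<lambda>x. (2*pi) * x) ` cbox 0 1 = {0..2*pi}"
    by (simp add: image_mult_atLeastAtMost)
  ultimately show ?thesis by (simp add: scaleR_conv_of_real)
qed

locale jacobi =
  fixes B C :: real
  assumes Bpos: "0 < B" and Cpos: "0 < C" and Clt: "C < sqrt 2 * B"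
begin

definition rr :: real where "rr = 1 - C^2/B^2"
definition DD :: "real \<Rightarrow> complex" where "DD \<theta> = 1 + of_real rr * cis (2*\<theta>)"
definition SS :: "real \<Rightarrow> complex" where "SS \<theta> = (1 + of_real rr * cis (-2*\<theta>)) / DD \<theta>"
definition ff :: "nat \<Rightarrow> real \<Rightarrow> complex" where
  "ff k \<theta> = cis (-(real k+1)*\<theta>) - SS \<theta> * cis ((real k+1)*\<theta>)"
definition QQ :: "nat \<Rightarrow> real \<Rightarrow> real" where
  "QQ k \<theta> = sin ((real k + 1)*\<theta>) + rr * sin ((real k - 1)*\<theta>)"
definition gc :: "nat \<Rightarrow> real" where "gc k = (if k = 0 then B/C else 1)"
definition gg :: "nat \<Rightarrow> real \<Rightarrow> complex" where "gg k \<theta> = of_real (gc k) * ff k \<theta>"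

lemma rr_bounds: "-1 < rr" "rr < 1" "\<bar>rr\<bar> < 1"
proof -
  have "C^2 < (sqrt 2 * B)^2" using Clt Cpos by (intro power_strict_mono) auto
  then have "C^2 < 2 * B^2" by (simp add: power_mult_distrib)
  then have "C^2/B^2 < 2" using Bpos by (simp add: divide_less_eq)
  moreover have "C^2/B^2 > 0" using Bpos Cpos by simp
  ultimately show "-1 < rr" "rr < 1" "\<bar>rr\<bar> < 1" unfolding rr_def by auto
qed

lemma one_minus_rr: "1 - rr = C^2/B^2" by (simp add: rr_def)

lemma DD_nz: "DD \<theta> \<noteq> 0"
proof
  assume "DD \<theta> = 0"
  then have "of_real rr * cis (2*\<theta>) = -1" by (simp add: DD_def add_eq_0_iff)
  then have "norm (of_real rr * cis (2*\<theta>)) = 1" by simp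
  then show False using rr_bounds by (simp add: norm_mult)
qed

lemma cnj_DD: "cnj (DD \<theta>) = 1 + of_real rr * cis (-2*\<theta>)"
  by (simp add: DD_def cis_cnj)

lemma SS_DD: "SS \<theta> * DD \<theta> = 1 + of_real rr * cis (-2*\<theta>)"
  using DD_nz by (simp add: SS_def)

lemma SS_norm: "cnj (SS \<theta>) * SS \<theta> = 1"
proof -
  have n: "cnj (DD \<theta>) \<noteq> 0" using DD_nz by simp
  have "SS \<theta> = cnj (DD \<theta>) / DD \<theta>" by (simp add: SS_def cnj_DD)
  then show ?thesis using n DD_nz by simp
qed

lemma ff_alt: "ff k \<theta> = -2 * \<i> * of_real (QQ k \<theta>) / DD \<theta>"
proof -
  have "ff k \<theta> * DD \<theta> = cis (-(real k+1)*\<theta>) * DD \<theta> - (SS \<theta> * DD \<theta>) * cis ((real k+1)*\<theta>)"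
    by (simp add: ff_def algebra_simps)
  also have "\<dots> = cis (-(real k+1)*\<theta>) + of_real rr * (cis (-(real k+1)*\<theta>) * cis (2*\<theta>))
       - cis ((real k+1)*\<theta>) - of_real rr * (cis (-2*\<theta>) * cis ((real k+1)*\<theta>))"
    unfolding SS_DD unfolding DD_def by algebra
  also have "\<dots> = cis (-((real k+1)*\<theta>)) + of_real rr * cis (-((real k - 1)*\<theta>))
       - cis ((real k+1)*\<theta>) - of_real rr * cis ((real k - 1)*\<theta>)"
  proof -
    have c1: "cis (-(real k+1)*\<theta>) * cis (2*\<theta>) = cis (-((real k - 1)*\<theta>))"
      using cis_mult[of "-(real k+1)*\<theta>" "2*\<theta>"] by (simp add: algebra_simps)
    have c2: "cis (-2*\<theta>) * cis ((real k+1)*\<theta>) = cis ((real k - 1)*\<theta>)"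
      using cis_mult[of "-2*\<theta>" "(real k+1)*\<theta>"] by (simp add: algebra_simps)
    show ?thesis unfolding c1 c2 by (simp add: algebra_simps)
  qed
  also have "\<dots> = -2 * \<i> * of_real (QQ k \<theta>)"
    by (simp add: complex_eq_iff QQ_def cos_minus sin_minus del: minus_mult_left mult_minus_left)
  finally show ?thesis using DD_nz by (simp add: field_simps)
qed

lemma QQ_rec: "QQ k \<theta> + QQ (k+2) \<theta> = 2 * cos \<theta> * QQ (k+1) \<theta>"
proof -
  have a: "sin ((real k + 1)*\<theta>) + sin ((real (k+2) + 1)*\<theta>) = 2 * cos \<theta> * sin ((real (k+1) + 1)*\<theta>)"
    using sin_rec[of "(real (k+1) + 1)*\<theta>" \<theta>] by (simp add: algebra_simps)
  have b: "sin ((real k - 1)*\<theta>) + sin ((real (k+2) - 1)*\<theta>) = 2 * cos \<theta> * sin ((real (k+1) - 1)*\<theta>)"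
    using sin_rec[of "(real (k+1) - 1)*\<theta>" \<theta>] by (simp add: algebra_simps)
  have "QQ k \<theta> + QQ (k+2) \<theta> = (sin ((real k + 1)*\<theta>) + sin ((real (k+2) + 1)*\<theta>))
      + rr * (sin ((real k - 1)*\<theta>) + sin ((real (k+2) - 1)*\<theta>))"
    by (simp add: QQ_def algebra_simps)
  also have "\<dots> = 2 * cos \<theta> * sin ((real (k+1) + 1)*\<theta>) + rr * (2 * cos \<theta> * sin ((real (k+1) - 1)*\<theta>))"
    by (simp only: a b)
  also have "\<dots> = 2 * cos \<theta> * QQ (k+1) \<theta>"
    by (simp add: QQ_def algebra_simps)
  finally show ?thesis .
qed

lemma QQ_0: "QQ 0 \<theta> = (1 - rr) * sin \<theta>" by (simp add: QQ_def algebra_simps)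
lemma QQ_1: "QQ 1 \<theta> = 2 * sin \<theta> * cos \<theta>" by (simp add: QQ_def sin_double)

lemma ff_rec: "ff k \<theta> + ff (k+2) \<theta> = of_real (2 * cos \<theta>) * ff (k+1) \<theta>"
proof -
  have "ff k \<theta> + ff (k+2) \<theta> = -2 * \<i> * of_real (QQ k \<theta> + QQ (k+2) \<theta>) / DD \<theta>"
    using DD_nz[of \<theta>] by (simp add: ff_alt field_simps)
  then show ?thesis unfolding QQ_rec using DD_nz[of \<theta>] by (simp add: ff_alt field_simps)
qed

lemma gg_H: "jac_apply B C (\<lambda>k. gg k \<theta>) l = of_real (2 * B * cos \<theta>) * gg l \<theta>"
proof -
  consider "l = 0" | "l = 1" | "l \<ge> 2" by linarith
  then show ?thesis
  proof cases
    case 1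
    have "of_real C * ff 1 \<theta> = of_real (2 * B * cos \<theta> * (B / C)) * ff 0 \<theta>"
      unfolding ff_alt QQ_0 QQ_1 one_minus_rr using Bpos Cpos
      by (simp add: field_simps power2_eq_square)
    then show ?thesis using 1 by (simp add: jac_apply_def jac_entry_def gg_def gc_def mult_ac)
  next
    case 2
    have "of_real B * (ff 0 \<theta> + ff (0+2) \<theta>) = of_real B * (of_real (2 * cos \<theta>) * ff 1 \<theta>)"
      using ff_rec[of 0 \<theta>] by simp
    then show ?thesis using 2 Cpos
      by (simp add: jac_apply_def jac_entry_def gg_def gc_def algebra_simps numeral_2_eq_2)
  next
    case 3
    then obtain m where m: "l = Suc (Suc m)" by (metis add_2_eq_Suc le_Suc_ex)
    have "of_real B * (ff (Suc m) \<theta> + ff (Suc m + 2) \<theta>) = of_real B * (of_real (2 * cos \<theta>) * ff (Suc m + 1) \<theta>)"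
      using ff_rec[of "Suc m" \<theta>] by simp
    then show ?thesis using m
      by (simp add: jac_apply_def jac_entry_def gg_def gc_def algebra_simps)
  qed
qed

end


context jacobi
begin

lemma int_cis_nat: "((\<lambda>\<theta>. cis (real n * \<theta>)) has_integral complex_of_real (if n = 0 then 2*pi else 0)) {0..2*pi}"
proof -
  have "(\<lambda>z::complex. z ^ n) holomorphic_on cball 0 1" by (intro holomorphic_intros)
  from mean_value_circle[OF this, unfolded Complex.DeMoivre] show ?thesis by (cases n) auto
qed

lemma int_cis_pair:
  "((\<lambda>\<theta>. cis ((real k - real l) * \<theta>) + cis ((real l - real k) * \<theta>)) has_integral
     complex_of_real (if k = l then 4*pi else 0)) {0..2*pi}"
proof -
  define n where "n = (if l \<le> k then k - l else l - k)"
  have eq: "cis ((real k - real l) * \<theta>) + cis ((real l - real k) * \<theta>) = cis (real n * \<theta>) + cnj (cis (real n * \<theta>))" for \<theta>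
    by (auto simp: n_def cis_cnj of_nat_diff algebra_simps)
  have h1: "((\<lambda>\<theta>. cis (real n * \<theta>)) has_integral complex_of_real (if n = 0 then 2*pi else 0)) {0..2*pi}"
    by (rule int_cis_nat)
  have h2: "((\<lambda>\<theta>. cnj (cis (real n * \<theta>))) has_integral complex_of_real (if n = 0 then 2*pi else 0)) {0..2*pi}"
    using has_integral_cnj[of "\<lambda>\<theta>. cis (real n * \<theta>)" _ "{0..2*pi}", THEN iffD2, OF h1]
    by (simp only: o_def complex_cnj_complex_of_real)
  have "n = 0 \<longleftrightarrow> k = l" by (auto simp: n_def)
  then have "complex_of_real (if n = 0 then 2*pi else 0) + complex_of_real (if n = 0 then 2*pi else 0)
     = complex_of_real (if k = l then 4*pi else 0)" by auto
  with has_integral_add[OF h1 h2] show ?thesis unfolding eq by (simp only:)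
qed

lemma int_SS:
  assumes q: "2 \<le> q"
  shows "((\<lambda>\<theta>. SS \<theta> * cis (real q * \<theta>)) has_integral complex_of_real (if q = 2 then 2*pi*rr else 0)) {0..2*pi}"
proof -
  define F where "F z = (z^2 + of_real rr) * z^(q-2) / (1 + of_real rr * z^2)" for z :: complex
  have nz: "1 + of_real rr * z^2 \<noteq> 0" if "z \<in> cball 0 1" for z :: complex
  proof
    assume "1 + of_real rr * z^2 = 0"
    then have "of_real rr * z^2 = -1" by (simp add: add_eq_0_iff)
    then have "norm (of_real rr * z^2) = 1" by simp
    moreover have "norm (of_real rr * z^2) \<le> \<bar>rr\<bar> * 1"
    proof -
      have "cmod z ^ 2 \<le> 1" using that by (simp add: power_le_one)
      from mult_left_mono[OF this abs_ge_zero[of rr]] show ?thesis by (simp add: norm_mult norm_power)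
    qed
    ultimately show False using rr_bounds by simp
  qed
  have hol: "F holomorphic_on cball 0 1"
    unfolding F_def by (intro holomorphic_intros) (use nz in auto)
  have eqF: "F (cis \<theta>) = SS \<theta> * cis (real q * \<theta>)" for \<theta>
  proof -
    have c1: "cis (2*\<theta>) * cis ((real q - 2) * \<theta>) = cis (real q * \<theta>)"
      by (simp add: cis_mult algebra_simps)
    have c2: "cis (-2*\<theta>) * cis (real q * \<theta>) = cis ((real q - 2) * \<theta>)"
      by (simp add: cis_mult algebra_simps)
    have "F (cis \<theta>) = (cis (2*\<theta>) + of_real rr) * cis ((real q - 2) * \<theta>) / DD \<theta>"
      unfolding F_def unfolding Complex.DeMoivre DD_def using q by (simp add: of_nat_diff mult.commute)
    also have "\<dots> = (1 + of_real rr * cis (-2*\<theta>)) * cis (real q * \<theta>) / DD \<theta>"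
    proof -
      have "(cis (2*\<theta>) + of_real rr) * cis ((real q - 2) * \<theta>) = cis (2*\<theta>) * cis ((real q - 2) * \<theta>) + of_real rr * cis ((real q - 2) * \<theta>)"
        by (simp add: algebra_simps)
      also have "\<dots> = cis (real q*\<theta>) + of_real rr * cis ((real q - 2)*\<theta>)"
        unfolding c1 by simp
      also have "\<dots> = (1 + of_real rr * cis (-2*\<theta>)) * cis (real q * \<theta>)"
        unfolding c2[symmetric] by algebra
      finally show ?thesis by simp
    qed
    also have "\<dots> = SS \<theta> * cis (real q * \<theta>)" by (simp add: SS_def)
    finally show ?thesis .
  qed
  have F0: "F 0 = of_real (if q = 2 then rr else 0)"
    using q by (auto simp: F_def)
  have v: "2 * pi * F 0 = complex_of_real (if q = 2 then 2*pi*rr else 0)" using F0 by simp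
  from mean_value_circle[OF hol] show ?thesis unfolding eqF v .
qed

lemma ff_prod:
  "cnj (ff k \<theta>) * ff l \<theta> = cis ((real k - real l)*\<theta>) + cis ((real l - real k)*\<theta>)
     - SS \<theta> * cis (real (k+l+2)*\<theta>) - cnj (SS \<theta> * cis (real (k+l+2)*\<theta>))"
proof -
  have c1: "cis ((real k+1)*\<theta>) * cis (-(real l+1)*\<theta>) = cis ((real k - real l)*\<theta>)"
    by (simp add: cis_mult algebra_simps)
  have c2: "cis ((real k+1)*\<theta>) * cis ((real l+1)*\<theta>) = cis (real (k+l+2)*\<theta>)"
    by (simp add: cis_mult algebra_simps)
  have c3: "cis (-(real k+1)*\<theta>) * cis (-(real l+1)*\<theta>) = cnj (cis (real (k+l+2)*\<theta>))"
    unfolding cis_mult cis_cnj by (rule arg_cong[where f=cis]) (simp add: algebra_simps)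
  have c4: "cis (-(real k+1)*\<theta>) * cis ((real l+1)*\<theta>) = cis ((real l - real k)*\<theta>)"
    by (simp add: cis_mult algebra_simps)
  have cf: "cnj (ff k \<theta>) = cis ((real k+1)*\<theta>) - cnj (SS \<theta>) * cis (-(real k+1)*\<theta>)"
    by (simp add: ff_def cis_cnj algebra_simps)
  have "cnj (ff k \<theta>) * ff l \<theta> =
      cis ((real k+1)*\<theta>) * cis (-(real l+1)*\<theta>)
    - SS \<theta> * (cis ((real k+1)*\<theta>) * cis ((real l+1)*\<theta>))
    - cnj (SS \<theta>) * (cis (-(real k+1)*\<theta>) * cis (-(real l+1)*\<theta>))
    + (cnj (SS \<theta>) * SS \<theta>) * (cis (-(real k+1)*\<theta>) * cis ((real l+1)*\<theta>))"
    unfolding cf by (simp add: ff_def algebra_simps)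
  also have "\<dots> = cis ((real k - real l)*\<theta>) + cis ((real l - real k)*\<theta>)
     - SS \<theta> * cis (real (k+l+2)*\<theta>) - cnj (SS \<theta> * cis (real (k+l+2)*\<theta>))"
    unfolding c1 c2 c3 c4 SS_norm by simp
  finally show ?thesis .
qed

lemma orth:
  "((\<lambda>\<theta>. cnj (gg k \<theta>) * gg l \<theta>) has_integral complex_of_real (if k = l then 4*pi else 0)) {0..2*pi}"
proof -
  have q: "2 \<le> k + l + 2" by simp
  have h3: "((\<lambda>\<theta>. cnj (SS \<theta> * cis (real (k+l+2) * \<theta>))) has_integral
      complex_of_real (if k+l+2 = 2 then 2*pi*rr else 0)) {0..2*pi}"
    using has_integral_cnj[of "\<lambda>\<theta>. SS \<theta> * cis (real (k+l+2) * \<theta>)" _ "{0..2*pi}", THEN iffD2, OF int_SS[OF q]]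
    by (simp only: o_def complex_cnj_complex_of_real)
  have hf: "((\<lambda>\<theta>. cnj (ff k \<theta>) * ff l \<theta>) has_integral
      (complex_of_real (if k = l then 4*pi else 0) - complex_of_real (if k+l+2 = 2 then 2*pi*rr else 0)
        - complex_of_real (if k+l+2 = 2 then 2*pi*rr else 0))) {0..2*pi}"
    unfolding ff_prod
    by (intro has_integral_diff int_cis_pair int_SS[OF q] h3)
  have eqg: "cnj (gg k \<theta>) * gg l \<theta> = of_real (gc k * gc l) * (cnj (ff k \<theta>) * ff l \<theta>)" for \<theta>
    by (simp add: gg_def)
  have "((\<lambda>\<theta>. cnj (gg k \<theta>) * gg l \<theta>) has_integral
      of_real (gc k * gc l) * (complex_of_real (if k = l then 4*pi else 0) - complex_of_real (if k+l+2 = 2 then 2*pi*rr else 0)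
        - complex_of_real (if k+l+2 = 2 then 2*pi*rr else 0))) {0..2*pi}"
    unfolding eqg by (rule has_integral_mult_right[OF hf])
  moreover have "of_real (gc k * gc l) * (complex_of_real (if k = l then 4*pi else 0) - complex_of_real (if k+l+2 = 2 then 2*pi*rr else 0)
        - complex_of_real (if k+l+2 = 2 then 2*pi*rr else 0)) = complex_of_real (if k = l then 4*pi else 0)"
  proof -
    have "of_real (gc k * gc l) * (complex_of_real (if k = l then 4*pi else 0) - complex_of_real (if k+l+2 = 2 then 2*pi*rr else 0)
        - complex_of_real (if k+l+2 = 2 then 2*pi*rr else 0)) = complex_of_real (gc k * gc l * ((if k = l then 4*pi else 0) - (if k+l+2 = 2 then 2*pi*rr else 0)
        - (if k+l+2 = 2 then 2*pi*rr else 0)))" by simp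
    also have "gc k * gc l * ((if k = l then 4*pi else 0) - (if k+l+2 = 2 then 2*pi*rr else 0)
        - (if k+l+2 = 2 then 2*pi*rr else 0)) = (if k = l then 4*pi else 0)"
    proof (cases "k = 0 \<and> l = 0")
      case True
      have "(B/C) * (B/C) * (4*pi - 2*pi*rr - 2*pi*rr) = (B/C)^2 * (4*pi*(1-rr))"
        by (simp add: power2_eq_square algebra_simps)
      also have "\<dots> = 4*pi" unfolding one_minus_rr using Bpos Cpos by (simp add: field_simps)
      finally show ?thesis using True by (simp add: gc_def)
    next
      case False
      then show ?thesis by (auto simp: gc_def)
    qed
    finally show ?thesis .
  qed
  ultimately show ?thesis by simp
qed

definition TT :: "(nat \<Rightarrow> complex) \<Rightarrow> nat \<Rightarrow> real \<Rightarrow> complex" where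
  "TT v K \<theta> = (\<Sum>k<K. v k * gg k \<theta>)"

lemma TT_H:
  assumes v: "\<forall>l. K \<le> Suc l \<longrightarrow> v l = 0"
  shows "TT (jac_apply B C v) K \<theta> = of_real (2*B*cos \<theta>) * TT v K \<theta>"
proof -
  have v': "\<forall>l\<ge>K. v l = 0" using v by auto
  have "TT (jac_apply B C v) K \<theta> = (\<Sum>k<K. \<Sum>l<K. of_real (jac_entry B C k l) * v l * gg k \<theta>)"
    unfolding TT_def jac_apply_sum[OF v'] by (simp add: sum_distrib_right)
  also have "\<dots> = (\<Sum>l<K. \<Sum>k<K. v l * (of_real (jac_entry B C l k) * gg k \<theta>))"
    apply (subst sum.swap) apply (intro sum.cong refl) by (subst jac_entry_sym) simp
  also have "\<dots> = (\<Sum>l<K. v l * (\<Sum>k<K. of_real (jac_entry B C l k) * gg k \<theta>))"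
    by (simp add: sum_distrib_left)
  also have "\<dots> = (\<Sum>l<K. v l * (of_real (2*B*cos \<theta>) * gg l \<theta>))"
  proof (intro sum.cong refl)
    fix l assume "l \<in> {..<K}"
    show "v l * (\<Sum>k<K. of_real (jac_entry B C l k) * gg k \<theta>) = v l * (of_real (2*B*cos \<theta>) * gg l \<theta>)"
    proof (cases "v l = 0")
      case False
      then have "\<not> K \<le> Suc l" using v by blast
      then have "l + 2 \<le> K" by simp
      then show ?thesis using gg_H[of \<theta> l] jac_apply_sum2[of l K B C "\<lambda>k. gg k \<theta>"] by simp
    qed simp
  qed
  also have "\<dots> = of_real (2*B*cos \<theta>) * TT v K \<theta>"
    by (simp add: TT_def sum_distrib_left mult_ac)
  finally show ?thesis .
qed

lemma TT_vv:
  assumes "j + n + 2 \<le> K"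
  shows "TT (vv B C j n) K \<theta> = of_real ((2*B*cos \<theta>)^n) * gg j \<theta>"
  using assms
proof (induction n)
  case 0
  have "TT (basis_vec j) K \<theta> = (\<Sum>k\<in>{j}. basis_vec j k * gg k \<theta>)"
    unfolding TT_def by (rule sum.mono_neutral_right) (use 0 in \<open>auto simp: basis_vec_def\<close>)
  then show ?case unfolding vv_0 by (simp add: basis_vec_def[of j j])
next
  case (Suc n)
  have "TT (vv B C j (Suc n)) K \<theta> = of_real (2*B*cos \<theta>) * TT (vv B C j n) K \<theta>"
    unfolding vv_Suc by (rule TT_H) (use Suc.prems in \<open>auto intro!: vv_supp\<close>)
  then show ?case using Suc by simp
qed

lemma moment:
  "((\<lambda>\<theta>. of_real ((2*B*cos \<theta>)^n) * (cnj (gg j \<theta>) * gg j \<theta>)) has_integral (4*pi) * vv B C j n j) {0..2*pi}"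
proof -
  define K where "K = j + n + 2"
  have h: "((\<lambda>\<theta>. \<Sum>k<K. vv B C j n k * (cnj (gg j \<theta>) * gg k \<theta>)) has_integral
      (\<Sum>k<K. vv B C j n k * complex_of_real (if j = k then 4*pi else 0))) {0..2*pi}"
    by (intro has_integral_sum finite_lessThan has_integral_mult_right orth)
  have s: "(\<Sum>k<K. vv B C j n k * complex_of_real (if j = k then 4*pi else 0)) = (4*pi) * vv B C j n j"
  proof -
    have "(\<Sum>k<K. vv B C j n k * complex_of_real (if j = k then 4*pi else 0)) =
        (\<Sum>k\<in>{j}. vv B C j n k * complex_of_real (if j = k then 4*pi else 0))"
      by (rule sum.mono_neutral_right) (auto simp: K_def)
    then show ?thesis by simp
  qed
  have e: "(\<Sum>k<K. vv B C j n k * (cnj (gg j \<theta>) * gg k \<theta>)) = of_real ((2*B*cos \<theta>)^n) * (cnj (gg j \<theta>) * gg j \<theta>)" for \<theta>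
  proof -
    have "(\<Sum>k<K. vv B C j n k * (cnj (gg j \<theta>) * gg k \<theta>)) = cnj (gg j \<theta>) * TT (vv B C j n) K \<theta>"
      by (simp add: TT_def sum_distrib_left mult_ac)
    also have "\<dots> = of_real ((2*B*cos \<theta>)^n) * (cnj (gg j \<theta>) * gg j \<theta>)"
      using TT_vv[of j n K \<theta>] by (simp add: K_def mult_ac)
    finally show ?thesis .
  qed
  show ?thesis using h unfolding s e .
qed

end


lemma exp_coeff_sum:
  fixes z :: "'a::field_char_0"
  shows "(\<Sum>n\<le>N. z^n / fact n * (z^(N-n) / fact (N-n))) = (2*z)^N / fact N"
proof -
  have "(2*z)^N = (z+z)^N" by (simp only: mult_2)
  also have "\<dots> = (\<Sum>n\<le>N. of_nat (N choose n) * z^n * z^(N-n))" by (rule binomial_ring)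
  also have "\<dots> = (\<Sum>n\<le>N. fact N * (z^n / fact n * (z^(N-n) / fact (N-n))))"
  proof (intro sum.cong refl)
    fix n assume "n \<in> {..N}"
    then have "n \<le> N" by simp
    then show "of_nat (N choose n) * z^n * z^(N-n) = fact N * (z^n / fact n * (z^(N-n) / fact (N-n)))"
      by (simp add: binomial_fact divide_inverse mult_ac)
  qed
  also have "\<dots> = fact N * (\<Sum>n\<le>N. z^n / fact n * (z^(N-n) / fact (N-n)))"
    by (rule sum_distrib_left[symmetric])
  finally have e: "(2*z)^N = fact N * (\<Sum>n\<le>N. z^n / fact n * (z^(N-n) / fact (N-n)))" .
  show ?thesis unfolding e by simp
qed

context jacobi
begin

definition cc :: "real \<Rightarrow> nat \<Rightarrow> complex" where
  "cc t n = (- \<i> * complex_of_real t) ^ n / of_nat (fact n)"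
definition aa :: "nat \<Rightarrow> real \<Rightarrow> nat \<Rightarrow> nat \<Rightarrow> complex" where
  "aa j t k n = cc t n * vv B C j n k"
definition dd :: "nat \<Rightarrow> real \<Rightarrow> nat \<Rightarrow> nat \<Rightarrow> complex" where
  "dd j t k N = (\<Sum>n\<le>N. aa j t k n * cnj (aa j t k (N - n)))"
definition XX :: "real \<Rightarrow> real" where "XX t = \<bar>t\<bar> * (2 * max B C)"

lemma XX_nonneg: "0 \<le> XX t" using Bpos by (simp add: XX_def)

lemma psi_aa: "psi B C j t k = (\<Sum>n. aa j t k n)"
  by (simp add: psi_def aa_def cc_def vv_def)

lemma aa_bound: "norm (aa j t k n) \<le> XX t ^ n / fact n"
proof -
  have "norm (aa j t k n) = \<bar>t\<bar>^n / fact n * norm (vv B C j n k)"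
    by (simp add: aa_def cc_def norm_mult norm_divide norm_power)
  also have "\<dots> \<le> \<bar>t\<bar>^n / fact n * (2 * max B C)^n"
    by (intro mult_left_mono vv_bound Bpos Cpos) auto
  also have "\<dots> = XX t ^ n / fact n" by (simp add: XX_def power_mult_distrib)
  finally show ?thesis .
qed

lemma aa_zero: "j + n < k \<Longrightarrow> aa j t k n = 0"
  by (simp add: aa_def vv_supp)

lemma summable_exp_real: "summable (\<lambda>n. x ^ n / fact n :: real)"
  using summable_exp[of x] by (simp add: field_simps)

lemma summable_norm_aa: "summable (\<lambda>n. norm (aa j t k n))"
  by (rule summable_comparison_test[OF _ summable_exp_real[of "XX t"]]) (auto intro: aa_bound)

lemma dd_bound: "norm (dd j t k N) \<le> (2 * XX t)^N / fact N"
proof -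
  have "norm (dd j t k N) \<le> (\<Sum>n\<le>N. norm (aa j t k n * cnj (aa j t k (N - n))))"
    unfolding dd_def by (rule norm_sum)
  also have "\<dots> \<le> (\<Sum>n\<le>N. XX t ^ n / fact n * (XX t ^ (N-n) / fact (N-n)))"
    unfolding norm_mult complex_mod_cnj
    by (intro sum_mono mult_mono aa_bound) (use XX_nonneg in \<open>auto simp: zero_le_divide_iff\<close>)
  also have "\<dots> = (2 * XX t)^N / fact N" by (rule exp_coeff_sum)
  finally show ?thesis .
qed

lemma dd_zero: "j + N < k \<Longrightarrow> dd j t k N = 0"
  unfolding dd_def by (intro sum.neutral) (auto simp: aa_zero)

lemma dd_has_sum: "((\<lambda>N. dd j t k N) has_sum (psi B C j t k * cnj (psi B C j t k))) UNIV"
proof (rule norm_summable_imp_has_sum)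
  show "summable (\<lambda>N. norm (dd j t k N))"
    by (rule summable_comparison_test'[OF summable_exp_real[of "2 * XX t"], of 0]) (use dd_bound in simp)
  have s2: "summable (\<lambda>n. norm (cnj (aa j t k n)))" using summable_norm_aa by simp
  have "(\<lambda>N. \<Sum>n\<le>N. aa j t k n * cnj (aa j t k (N - n))) sums ((\<Sum>n. aa j t k n) * (\<Sum>n. cnj (aa j t k n)))"
    by (rule Cauchy_product_sums[OF summable_norm_aa s2])
  moreover have "(\<Sum>n. cnj (aa j t k n)) = cnj (\<Sum>n. aa j t k n)"
  proof -
    have "summable (\<lambda>n. aa j t k n)" using summable_norm_aa summable_norm_cancel by blast
    then have "(\<lambda>n. aa j t k n) sums (\<Sum>n. aa j t k n)" by (rule summable_sums)
    then have "(\<lambda>n. cnj (aa j t k n)) sums cnj (\<Sum>n. aa j t k n)" by (simp add: sums_cnj)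
    then show ?thesis by (rule sums_unique[symmetric])
  qed
  ultimately show "(\<lambda>N. dd j t k N) sums (psi B C j t k * cnj (psi B C j t k))"
    by (simp add: dd_def psi_aa)
qed

definition FF :: "nat \<Rightarrow> real \<Rightarrow> nat \<times> nat \<Rightarrow> complex" where
  "FF j t p = (-1) ^ fst p * dd j t (fst p) (snd p)"

lemma FF_summable: "FF j t summable_on (UNIV \<times> UNIV)"
proof -
  define g where "g p = 2^j * (1/2)^(fst p) * ((4 * XX t)^(snd p) / fact (snd p))" for p :: "nat \<times> nat"
  have g_nonneg: "0 \<le> g p" for p unfolding g_def using XX_nonneg by auto
  have inner: "((\<lambda>N. g (k, N)) has_sum (2^j * (1/2)^k * exp (4 * XX t))) UNIV" for k
  proof -
    have "(\<lambda>N. (4 * XX t)^N /\<^sub>R fact N) sums exp (4 * XX t)" by (rule exp_converges)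
    then have "(\<lambda>N. (4 * XX t)^N / fact N) sums exp (4 * XX t)" by (simp add: divide_inverse_commute)
    then have "(\<lambda>N. 2^j * (1/2)^k * ((4 * XX t)^N / fact N)) sums (2^j * (1/2)^k * exp (4 * XX t))"
      by (rule sums_mult)
    then show ?thesis unfolding g_def
      by (intro sums_nonneg_imp_has_sum) (use XX_nonneg in auto)
  qed
  have outer: "(\<lambda>k. 2^j * (1/2)^k * exp (4 * XX t)) summable_on UNIV"
  proof -
    have "summable (\<lambda>k. 2^j * exp (4 * XX t) * (1/2::real)^k)"
      by (intro summable_mult summable_geometric) auto
    then have "summable (\<lambda>k. 2^j * (1/2)^k * exp (4 * XX t) :: real)" by (simp add: mult_ac)
    then show ?thesis by (subst summable_on_UNIV_nonneg_real_iff) auto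
  qed
  have "g summable_on Sigma UNIV (\<lambda>_. UNIV)"
    by (rule summable_on_SigmaI[OF inner outer]) (use g_nonneg in auto)
  then have gs: "(\<lambda>p. norm (g p)) summable_on (UNIV \<times> UNIV)" using g_nonneg by simp
  have "(\<lambda>p. norm (FF j t p)) summable_on (UNIV \<times> UNIV)"
  proof (rule Infinite_Sum.abs_summable_on_comparison_test[OF gs])
    fix p :: "nat \<times> nat" assume "p \<in> UNIV \<times> UNIV"
    obtain k N where p: "p = (k, N)" by fastforce
    show "norm (FF j t p) \<le> norm (g p)"
    proof (cases "k \<le> j + N")
      case True
      have "norm (FF j t p) = norm (dd j t k N)" by (simp add: FF_def p norm_mult norm_power)
      also have "\<dots> \<le> (2 * XX t)^N / fact N" by (rule dd_bound)
      also have "\<dots> \<le> (2 * XX t)^N / fact N * (2^(j+N) * (1/2)^k)"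
      proof -
        have "(2::real)^k \<le> 2^(j+N)" using True by (intro power_increasing) auto
        then have one_le: "1 \<le> (2::real)^(j+N) * (1/2)^k" by (simp add: power_one_over field_simps)
        have nn: "0 \<le> (2 * XX t)^N / fact N" using XX_nonneg by simp
        from mult_left_mono[OF one_le nn] show ?thesis by simp
      qed
      also have "\<dots> = g p"
      proof -
        have f4: "(2::real)^N * 2^N = 4^N" by (simp add: power_mult_distrib[symmetric])
        show ?thesis by (simp add: g_def p power_add power_mult_distrib field_simps f4)
      qed
      finally show ?thesis using g_nonneg by simp
    next
      case False
      then show ?thesis by (simp add: FF_def p dd_zero)
    qed
  qed
  then show ?thesis by (simp add: summable_on_iff_abs_summable_on_complex)
qed

lemma cc_parity: "cc t n * cnj (cc t m) * (-1)^(n+j) = (-1)^j * ((\<i> * of_real t)^n / fact n * ((\<i> * of_real t)^m / fact m))"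
proof -
  have a: "(-1)^n * (- \<i> * complex_of_real t)^n = (\<i> * of_real t)^n"
    by (simp add: power_mult_distrib[symmetric])
  have b: "cnj (- \<i> * complex_of_real t) ^ m = (\<i> * of_real t)^m" by simp
  have "cc t n * cnj (cc t m) * (-1)^(n+j) = (-1)^j * (((-1)^n * (- \<i> * complex_of_real t)^n) / fact n * (cnj (- \<i> * complex_of_real t) ^ m / fact m))"
    by (simp add: cc_def power_add mult_ac)
  then show ?thesis unfolding a b .
qed

lemma FF_k_sum:
  "(\<Sum>k<j+N+2. FF j t (k,N)) = (-1)^j * ((2 * (\<i> * of_real t))^N / fact N) * vv B C j N j"
proof -
  define K where "K = j + N + 2"
  have "(\<Sum>k<K. FF j t (k,N)) = (\<Sum>k<K. \<Sum>n\<le>N. (-1)^k * (cc t n * vv B C j n k * (cnj (cc t (N-n)) * vv B C j (N-n) k)))"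
    by (simp add: FF_def dd_def aa_def sum_distrib_left vv_real)
  also have "\<dots> = (\<Sum>n\<le>N. \<Sum>k<K. (-1)^k * (cc t n * vv B C j n k * (cnj (cc t (N-n)) * vv B C j (N-n) k)))"
    by (rule sum.swap)
  also have "\<dots> = (\<Sum>n\<le>N. (cc t n * cnj (cc t (N-n))) * (\<Sum>k<K. (-1)^k * vv B C j n k * vv B C j (N-n) k))"
    by (simp add: sum_distrib_left mult_ac)
  also have "\<dots> = (\<Sum>n\<le>N. (cc t n * cnj (cc t (N-n))) * ((-1)^(n+j) * vv B C j N j))"
  proof (intro sum.cong refl)
    fix n assume "n \<in> {..N}"
    then have n: "n \<le> N" by simp
    have "(\<Sum>k<K. (-1)^k * vv B C j n k * vv B C j (N-n) k) = (-1)^(n+j) * vv B C j (n + (N-n)) j"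
      by (rule P_inner) (use n in \<open>simp add: K_def\<close>)
    then show "(cc t n * cnj (cc t (N-n))) * (\<Sum>k<K. (-1)^k * vv B C j n k * vv B C j (N-n) k) = (cc t n * cnj (cc t (N-n))) * ((-1)^(n+j) * vv B C j N j)"
      using n by simp
  qed
  also have "\<dots> = (\<Sum>n\<le>N. (-1)^j * ((\<i> * of_real t)^n / fact n * ((\<i> * of_real t)^(N-n) / fact (N-n))) * vv B C j N j)"
  proof (intro sum.cong refl)
    fix n
    have "(cc t n * cnj (cc t (N-n))) * ((-1)^(n+j) * vv B C j N j) = (cc t n * cnj (cc t (N-n)) * (-1)^(n+j)) * vv B C j N j"
      by (simp only: mult.assoc)
    then show "(cc t n * cnj (cc t (N-n))) * ((-1)^(n+j) * vv B C j N j) = (-1)^j * ((\<i> * of_real t)^n / fact n * ((\<i> * of_real t)^(N-n) / fact (N-n))) * vv B C j N j"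
      by (simp only: cc_parity)
  qed
  also have "\<dots> = (-1)^j * (\<Sum>n\<le>N. (\<i> * of_real t)^n / fact n * ((\<i> * of_real t)^(N-n) / fact (N-n))) * vv B C j N j"
    by (simp add: sum_distrib_left sum_distrib_right mult_ac)
  also have "\<dots> = (-1)^j * ((2 * (\<i> * of_real t))^N / fact N) * vv B C j N j"
    by (simp only: exp_coeff_sum)
  finally show ?thesis by (simp add: K_def)
qed

lemma parity_series:
  "\<exists>S. (\<lambda>N. (-1)^j * ((2 * (\<i> * of_real t))^N / fact N) * vv B C j N j) sums S \<and> parity_expect B C j t = Re S"
proof -
  have sm: "FF j t summable_on (UNIV \<times> UNIV)" by (rule FF_summable)
  define S where "S = infsum (FF j t) (UNIV \<times> UNIV)"
  have hs: "(FF j t has_sum S) (UNIV \<times> UNIV)" using sm by (simp add: S_def)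
  have innerN: "((\<lambda>N. FF j t (k, N)) has_sum ((-1)^k * (psi B C j t k * cnj (psi B C j t k)))) UNIV" for k
    unfolding FF_def fst_conv snd_conv by (rule has_sum_cmult_right[OF dd_has_sum])
  have hk: "((\<lambda>k. (-1)^k * (psi B C j t k * cnj (psi B C j t k))) has_sum S) UNIV"
    by (rule has_sum_Sigma'[OF hs[unfolded Sigma_def[symmetric]]]) (use innerN in auto)
  have "(\<lambda>k. (-1)^k * (psi B C j t k * cnj (psi B C j t k))) sums S" by (rule has_sum_imp_sums[OF hk])
  then have "(\<lambda>k. Re ((-1)^k * (psi B C j t k * cnj (psi B C j t k)))) sums Re S" by (rule sums_Re)
  moreover have "Re ((-1)^k * (psi B C j t k * cnj (psi B C j t k))) = (-1)^k * (cmod (psi B C j t k))^2" for k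
  proof -
    have "psi B C j t k * cnj (psi B C j t k) = of_real ((cmod (psi B C j t k))^2)"
      by (simp add: complex_mult_cnj cmod_power2)
    moreover have "((-1)^k :: complex) = of_real ((-1)^k)" by simp
    ultimately show ?thesis by (simp only: of_real_mult[symmetric] Re_complex_of_real)
  qed
  ultimately have "(\<lambda>k. (-1)^k * (cmod (psi B C j t k))^2) sums Re S" by simp
  then have par: "parity_expect B C j t = Re S" by (simp add: parity_expect_def sums_iff)
  have hs': "((\<lambda>(N,k). FF j t (k, N)) has_sum S) (UNIV \<times> UNIV)"
    using hs has_sum_swap by blast
  have innerK: "((\<lambda>k. FF j t (k, N)) has_sum ((-1)^j * ((2 * (\<i> * of_real t))^N / fact N) * vv B C j N j)) UNIV" for N
  proof -
    have "((\<lambda>k. FF j t (k, N)) has_sum (\<Sum>k<j+N+2. FF j t (k,N))) {..<j+N+2}"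
      by (rule has_sum_finiteI) auto
    then have "((\<lambda>k. FF j t (k, N)) has_sum (\<Sum>k<j+N+2. FF j t (k,N))) UNIV"
      by (rule has_sum_cong_neutral[THEN iffD1, rotated -1]) (auto simp: FF_def dd_zero)
    then show ?thesis unfolding FF_k_sum .
  qed
  have hN: "((\<lambda>N. (-1)^j * ((2 * (\<i> * of_real t))^N / fact N) * vv B C j N j) has_sum S) UNIV"
    by (rule has_sum_Sigma'[OF hs'[unfolded Sigma_def[symmetric]]]) (use innerK in auto)
  show ?thesis using has_sum_imp_sums[OF hN] par by blast
qed

end


lemma continuous_on_cis_comp [continuous_intros]:
  "continuous_on S f \<Longrightarrow> continuous_on S (\<lambda>x. cis (f x))"
  unfolding cis_conv_exp by (intro continuous_intros)

context jacobi
begin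

definition ww :: "nat \<Rightarrow> real \<Rightarrow> complex" where "ww j \<theta> = cnj (gg j \<theta>) * gg j \<theta>"

lemma SS_cmod: "cmod (SS \<theta>) = 1"
proof -
  have "cmod (SS \<theta> * cnj (SS \<theta>)) = 1" using SS_norm[of \<theta>] by (simp add: mult.commute)
  then have "(cmod (SS \<theta>))^2 = 1" by (simp add: complex_mod_mult_cnj)
  then show ?thesis using norm_ge_zero[of "SS \<theta>"] by (auto simp: power2_eq_1_iff)
qed

lemma ff_norm: "cmod (ff k \<theta>) \<le> 2"
proof -
  have "cmod (ff k \<theta>) \<le> cmod (cis (-(real k+1)*\<theta>)) + cmod (SS \<theta> * cis ((real k+1)*\<theta>))"
    unfolding ff_def by (rule norm_triangle_ineq4)
  also have "\<dots> = 2" by (simp add: norm_mult SS_cmod)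
  finally show ?thesis .
qed

lemma gc_pos: "0 < gc k" using Bpos Cpos by (simp add: gc_def)

lemma ww_norm: "cmod (ww j \<theta>) \<le> (2 * gc j)^2"
proof -
  have "cmod (ww j \<theta>) = (gc j * cmod (ff j \<theta>))^2"
    using gc_pos[of j] by (simp add: ww_def gg_def norm_mult power2_eq_square)
  also have "\<dots> \<le> (gc j * 2)^2"
    using gc_pos[of j] ff_norm[of j \<theta>] by (intro power_mono mult_left_mono) auto
  finally show ?thesis by (simp add: mult.commute)
qed

lemma DD_cont: "continuous_on S DD"
  unfolding DD_def by (intro continuous_intros)

lemma ww_cont: "continuous_on S (ww j)"
proof -
  have "continuous_on S SS"
    unfolding SS_def using DD_nz by (intro continuous_intros DD_cont) auto
  then show ?thesis
    unfolding ww_def gg_def ff_def by (intro continuous_intros)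
qed

lemma series_integral:
  "(\<lambda>N. (2 * (\<i> * of_real t))^N / fact N * vv B C j N j) sums
     (integral {0..2*pi} (\<lambda>\<theta>. cis (4*B*t*cos \<theta>) * ww j \<theta>) / (4*pi))"
proof -
  define u where "u N \<theta> = (2 * (\<i> * of_real t))^N / fact N * (of_real ((2*B*cos \<theta>)^N) * ww j \<theta>)" for N \<theta>
  define M where "M N = (4*B*\<bar>t\<bar>)^N / fact N * (2 * gc j)^2" for N
  define g where "g \<theta> = cis (4*B*t*cos \<theta>) * ww j \<theta>" for \<theta>
  have bound: "norm (u N \<theta>) \<le> M N" for N \<theta>
  proof -
    have c: "\<bar>2*B*cos \<theta>\<bar> \<le> 2*B" using Bpos abs_cos_le_one[of \<theta>] by (simp add: abs_mult)
    have "norm (u N \<theta>) = (2*\<bar>t\<bar>)^N / fact N * (\<bar>2*B*cos \<theta>\<bar>^N * cmod (ww j \<theta>))"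
      by (simp add: u_def norm_mult norm_divide norm_power abs_mult del: power_abs)
    also have "\<dots> \<le> (2*\<bar>t\<bar>)^N / fact N * ((2*B)^N * (2 * gc j)^2)"
      by (intro mult_left_mono mult_mono power_mono c ww_norm) (use Bpos in auto)
    also have "\<dots> = M N"
    proof -
      have f4: "(2::real)^N * 2^N = 4^N" by (simp add: power_mult_distrib[symmetric])
      show ?thesis by (simp add: M_def power_mult_distrib field_simps f4)
    qed
    finally show ?thesis .
  qed
  have sM: "summable M"
    unfolding M_def by (intro summable_mult2 summable_exp_real)
  have ul: "uniform_limit {0..2*pi} (\<lambda>n \<theta>. \<Sum>N<n. u N \<theta>) (\<lambda>\<theta>. \<Sum>N. u N \<theta>) sequentially"
    by (rule Weierstrass_m_test_ev[OF _ sM]) (use bound in auto)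
  have pw: "(\<lambda>N. u N \<theta>) sums g \<theta>" for \<theta>
  proof -
    define w where "w = \<i> * of_real (4*B*t*cos \<theta>)"
    have "(\<lambda>N. w^N /\<^sub>R fact N) sums exp w" by (rule exp_converges)
    then have "(\<lambda>N. w^N /\<^sub>R fact N * ww j \<theta>) sums (exp w * ww j \<theta>)" by (rule sums_mult2)
    moreover have "w^N /\<^sub>R fact N * ww j \<theta> = u N \<theta>" for N
    proof -
      have "w = 2 * (\<i> * of_real t) * of_real (2*B*cos \<theta>)" by (simp add: w_def)
      then have "w^N = (2 * (\<i> * of_real t))^N * of_real ((2*B*cos \<theta>)^N)"
        by (simp only: power_mult_distrib[of "2 * (\<i> * of_real t)"] of_real_power)
      then show ?thesis by (simp add: u_def scaleR_conv_of_real divide_inverse mult_ac)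
    qed
    moreover have "exp w = cis (4*B*t*cos \<theta>)" by (simp add: w_def cis_conv_exp)
    ultimately show ?thesis by (simp add: g_def)
  qed
  have geq: "(\<lambda>\<theta>. \<Sum>N. u N \<theta>) = g" using pw by (auto simp: sums_iff)
  have cont: "continuous_on {0..2*pi} (\<lambda>\<theta>. \<Sum>N<n. u N \<theta>)" for n
    unfolding u_def by (intro continuous_intros ww_cont)
  obtain I J where I: "\<And>n. ((\<lambda>\<theta>. \<Sum>N<n. u N \<theta>) has_integral I n) {0..2*pi}"
      and J: "(g has_integral J) {0..2*pi}" and IJ: "I \<longlonglongrightarrow> J"
    using uniform_limit_integral[OF ul[unfolded geq] cont] by auto
  have In: "I n = (\<Sum>N<n. (2 * (\<i> * of_real t))^N / fact N * ((4*pi) * vv B C j N j))" for n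
  proof -
    have "((\<lambda>\<theta>. \<Sum>N<n. u N \<theta>) has_integral (\<Sum>N<n. (2 * (\<i> * of_real t))^N / fact N * ((4*pi) * vv B C j N j))) {0..2*pi}"
      unfolding u_def ww_def
      by (intro has_integral_sum finite_lessThan has_integral_mult_right moment)
    then show ?thesis using I[of n] has_integral_unique by blast
  qed
  have "(\<lambda>N. (2 * (\<i> * of_real t))^N / fact N * ((4*pi) * vv B C j N j)) sums J"
  proof -
    have Ieq: "I = (\<lambda>n. \<Sum>N<n. (2 * (\<i> * of_real t))^N / fact N * ((4*pi) * vv B C j N j))"
      by (rule ext) (rule In)
    show ?thesis unfolding sums_def using IJ unfolding Ieq .
  qed
  then have "(\<lambda>N. (2 * (\<i> * of_real t))^N / fact N * ((4*pi) * vv B C j N j) / (4*pi)) sums (J / (4*pi))"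
    by (rule sums_divide)
  moreover have "J = integral {0..2*pi} g" using J by (rule integral_unique[symmetric])
  ultimately have "(\<lambda>N. (2 * (\<i> * of_real t))^N / fact N * ((4*pi) * vv B C j N j) / (4*pi)) sums (integral {0..2*pi} g / (4*pi))"
    by simp
  moreover have "g = (\<lambda>\<theta>. cis (4*B*t*cos \<theta>) * ww j \<theta>)" by (rule ext) (simp add: g_def)
  moreover have "(2 * (\<i> * of_real t))^N / fact N * ((4*pi) * vv B C j N j) / (4*pi) = (2 * (\<i> * of_real t))^N / fact N * vv B C j N j" for N
    by simp
  ultimately show ?thesis by (simp add: mult.assoc)
qed

end


context jacobi
begin

fun PP :: "nat \<Rightarrow> real \<Rightarrow> real" where
  "PP 0 \<theta> = 1 - rr"
| "PP (Suc 0) \<theta> = 2 * cos \<theta>"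
| "PP (Suc (Suc k)) \<theta> = 2 * cos \<theta> * PP (Suc k) \<theta> - PP k \<theta>"

fun PPd :: "nat \<Rightarrow> real \<Rightarrow> real" where
  "PPd 0 \<theta> = 0"
| "PPd (Suc 0) \<theta> = - 2 * sin \<theta>"
| "PPd (Suc (Suc k)) \<theta> = (- 2 * sin \<theta>) * PP (Suc k) \<theta> + 2 * cos \<theta> * PPd (Suc k) \<theta> - PPd k \<theta>"

lemma QQ_PP_pair: "QQ k \<theta> = sin \<theta> * PP k \<theta> \<and> QQ (Suc k) \<theta> = sin \<theta> * PP (Suc k) \<theta>"
proof (induction k)
  case 0 then show ?case using QQ_1[of \<theta>, unfolded One_nat_def] by (simp add: QQ_0 mult_ac)
next
  case (Suc k)
  have "QQ (Suc (Suc k)) \<theta> = 2 * cos \<theta> * QQ (Suc k) \<theta> - QQ k \<theta>"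
    using QQ_rec[of k \<theta>] by simp
  then show ?case using Suc by (simp add: algebra_simps)
qed

lemma QQ_PP: "QQ k \<theta> = sin \<theta> * PP k \<theta>" using QQ_PP_pair by blast

lemma PP_deriv_pair: "(\<forall>\<theta>. (PP k has_real_derivative PPd k \<theta>) (at \<theta>)) \<and> (\<forall>\<theta>. (PP (Suc k) has_real_derivative PPd (Suc k) \<theta>) (at \<theta>))"
proof (induction k)
  case 0
  have a: "PP 0 = (\<lambda>\<theta>. 1 - rr)" by (rule ext) simp
  have b: "PP (Suc 0) = (\<lambda>\<theta>. 2 * cos \<theta>)" by (rule ext) simp
  show ?case unfolding a b by (auto intro!: derivative_eq_intros)
next
  case (Suc k)
  have a: "PP (Suc (Suc k)) = (\<lambda>\<theta>. 2 * cos \<theta> * PP (Suc k) \<theta> - PP k \<theta>)" by (rule ext) simp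
  have "(PP (Suc (Suc k)) has_real_derivative PPd (Suc (Suc k)) \<theta>) (at \<theta>)" for \<theta>
    unfolding a using Suc by (auto intro!: derivative_eq_intros simp: algebra_simps)
  then show ?case using Suc by blast
qed

lemma PP_deriv: "(PP k has_real_derivative PPd k \<theta>) (at \<theta>)" using PP_deriv_pair by blast

lemma PP_cont_pair: "continuous_on UNIV (PP k) \<and> continuous_on UNIV (PP (Suc k)) \<and>
    continuous_on UNIV (PPd k) \<and> continuous_on UNIV (PPd (Suc k))"
proof (induction k)
  case 0
  have a: "PP 0 = (\<lambda>\<theta>. 1 - rr)" by (rule ext) simp
  have b: "PP (Suc 0) = (\<lambda>\<theta>. 2 * cos \<theta>)" by (rule ext) simp
  have c: "PPd 0 = (\<lambda>\<theta>. 0)" by (rule ext) simp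
  have d: "PPd (Suc 0) = (\<lambda>\<theta>. - 2 * sin \<theta>)" by (rule ext) simp
  show ?case unfolding a b c d by (intro conjI continuous_intros)
next
  case (Suc k)
  have a: "PP (Suc (Suc k)) = (\<lambda>\<theta>. 2 * cos \<theta> * PP (Suc k) \<theta> - PP k \<theta>)" by (rule ext) simp
  have b: "PPd (Suc (Suc k)) = (\<lambda>\<theta>. (- 2 * sin \<theta>) * PP (Suc k) \<theta> + 2 * cos \<theta> * PPd (Suc k) \<theta> - PPd k \<theta>)"
    by (rule ext) simp
  show ?case unfolding a b using Suc by (intro conjI continuous_intros) auto
qed

lemma PP_cont: "continuous_on S (PP k)" using PP_cont_pair continuous_on_subset by blast
lemma PPd_cont: "continuous_on S (PPd k)" using PP_cont_pair continuous_on_subset by blast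

definition Dr :: "real \<Rightarrow> real" where "Dr \<theta> = 1 + 2 * rr * cos (2*\<theta>) + rr^2"

lemma cmod_DD: "(cmod (DD \<theta>))^2 = Dr \<theta>"
proof -
  have "(cmod (DD \<theta>))^2 = (1 + rr * cos (2*\<theta>))^2 + (rr * sin (2*\<theta>))^2"
    by (simp add: DD_def cmod_power2)
  also have "\<dots> = 1 + 2 * rr * cos (2*\<theta>) + rr^2 * ((sin (2*\<theta>))^2 + (cos (2*\<theta>))^2)"
    by algebra
  also have "\<dots> = Dr \<theta>" by (simp add: Dr_def)
  finally show ?thesis .
qed

lemma Dr_pos: "0 < Dr \<theta>"
  using DD_nz[of \<theta>] cmod_DD[of \<theta>] by (metis zero_less_norm_iff zero_less_power)

lemma Dr_deriv: "(Dr has_real_derivative (- 4 * rr * sin (2*\<theta>))) (at \<theta>)"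
  unfolding Dr_def by (auto intro!: derivative_eq_intros)

lemma Dr_cont: "continuous_on S Dr" unfolding Dr_def by (intro continuous_intros)

definition GG :: "nat \<Rightarrow> real \<Rightarrow> real" where
  "GG j \<theta> = (4 * (gc j)^2) * (sin \<theta> * (PP j \<theta> * PP j \<theta>) / Dr \<theta>)"

definition GGd :: "nat \<Rightarrow> real \<Rightarrow> real" where
  "GGd j \<theta> = (4 * (gc j)^2) *
     (((cos \<theta> * (PP j \<theta> * PP j \<theta>) + (PPd j \<theta> * PP j \<theta> + PPd j \<theta> * PP j \<theta>) * sin \<theta>) * Dr \<theta>
        - sin \<theta> * (PP j \<theta> * PP j \<theta>) * (- 4 * rr * sin (2*\<theta>))) / (Dr \<theta> * Dr \<theta>))"

lemma GG_deriv: "(GG j has_real_derivative GGd j \<theta>) (at \<theta>)"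
proof -
  have "((\<lambda>\<theta>. (4 * (gc j)^2) * (sin \<theta> * (PP j \<theta> * PP j \<theta>) / Dr \<theta>)) has_real_derivative GGd j \<theta>) (at \<theta>)"
    unfolding GGd_def
    by (intro DERIV_cmult DERIV_divide DERIV_mult DERIV_sin PP_deriv Dr_deriv)
       (use Dr_pos[of \<theta>] in simp)
  moreover have "GG j = (\<lambda>\<theta>. (4 * (gc j)^2) * (sin \<theta> * (PP j \<theta> * PP j \<theta>) / Dr \<theta>))"
    by (rule ext) (simp add: GG_def)
  ultimately show ?thesis by simp
qed

lemma GGd_cont: "continuous_on S (GGd j)"
proof -
  have "\<forall>\<theta>\<in>S. Dr \<theta> * Dr \<theta> \<noteq> 0" using Dr_pos by (simp add: less_imp_neq[symmetric])
  then show ?thesis unfolding GGd_def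
    by (intro continuous_intros PP_cont PPd_cont Dr_cont) auto
qed

lemma GG_cont: "continuous_on S (GG j)"
proof -
  have "\<forall>\<theta>\<in>S. Dr \<theta> \<noteq> 0" using Dr_pos by (simp add: less_imp_neq[symmetric])
  then show ?thesis unfolding GG_def
    by (intro continuous_intros PP_cont Dr_cont) auto
qed

lemma ww_GG: "ww j \<theta> = of_real (sin \<theta> * GG j \<theta>)"
proof -
  have "cnj (ff j \<theta>) * ff j \<theta> = of_real ((cmod (ff j \<theta>))^2)"
    by (simp add: complex_mult_cnj cmod_power2 mult.commute)
  also have "(cmod (ff j \<theta>))^2 = 4 * (QQ j \<theta>)^2 / Dr \<theta>"
    by (simp add: ff_alt norm_mult norm_divide power_divide power_mult_distrib cmod_DD[symmetric])
  finally have e: "cnj (ff j \<theta>) * ff j \<theta> = of_real (4 * (QQ j \<theta>)^2 / Dr \<theta>)" .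
  have "ww j \<theta> = of_real ((gc j)^2) * (cnj (ff j \<theta>) * ff j \<theta>)"
    by (simp add: ww_def gg_def power2_eq_square mult_ac)
  also have "\<dots> = of_real ((gc j)^2 * (4 * (QQ j \<theta>)^2 / Dr \<theta>))" unfolding e by simp
  also have "(gc j)^2 * (4 * (QQ j \<theta>)^2 / Dr \<theta>) = sin \<theta> * GG j \<theta>"
    by (simp add: GG_def QQ_PP power2_eq_square)
  finally show ?thesis .
qed

definition KK :: "nat \<Rightarrow> real" where "KK j = integral {0..2*pi} (\<lambda>\<theta>. \<bar>GGd j \<theta>\<bar>)"

lemma decay:
  assumes s: "0 < s"
  shows "cmod (integral {0..2*pi} (\<lambda>\<theta>. cis (s * cos \<theta>) * ww j \<theta>)) \<le> KK j / s"
proof -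
  define EE where "EE \<theta> = cis (s * cos \<theta>)" for \<theta>
  have EEe: "EE = (\<lambda>\<theta>. of_real (cos (s * cos \<theta>)) + \<i> * of_real (sin (s * cos \<theta>)))"
    by (rule ext) (simp add: EE_def complex_eq_iff)
  have dE: "(EE has_vector_derivative (\<i> * of_real (- s * sin \<theta>) * EE \<theta>)) (at \<theta>)" for \<theta>
    unfolding EEe
    by (auto intro!: derivative_eq_intros simp: complex_eq_iff)
  have dG: "((\<lambda>\<theta>. of_real (GG j \<theta>) :: complex) has_vector_derivative of_real (GGd j \<theta>)) (at \<theta>)" for \<theta>
    by (intro has_vector_derivative_of_real GG_deriv)
  have dH: "((\<lambda>\<theta>. EE \<theta> * of_real (GG j \<theta>)) has_vector_derivative
      (EE \<theta> * of_real (GGd j \<theta>) + (- \<i> * of_real s) * (cis (s * cos \<theta>) * ww j \<theta>))) (at \<theta>)" for \<theta>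
  proof -
    have eq: "(\<i> * of_real (- s * sin \<theta>) * EE \<theta>) * of_real (GG j \<theta>) = (- \<i> * of_real s) * (cis (s * cos \<theta>) * ww j \<theta>)"
      by (simp add: ww_GG EE_def mult_ac)
    show ?thesis using has_vector_derivative_mult[OF dE[of \<theta>] dG[of \<theta>]] unfolding eq .
  qed
  have zero: "EE (2*pi) * of_real (GG j (2*pi)) - EE 0 * of_real (GG j 0) = 0"
    by (simp add: GG_def)
  have hsum: "((\<lambda>\<theta>. EE \<theta> * of_real (GGd j \<theta>) + (- \<i> * of_real s) * (cis (s * cos \<theta>) * ww j \<theta>)) has_integral 0) {0..2*pi}"
  proof -
    have "((\<lambda>\<theta>. EE \<theta> * of_real (GGd j \<theta>) + (- \<i> * of_real s) * (cis (s * cos \<theta>) * ww j \<theta>)) has_integral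
        (EE (2*pi) * of_real (GG j (2*pi)) - EE 0 * of_real (GG j 0))) {0..2*pi}"
      by (rule fundamental_theorem_of_calculus) (simp, rule has_vector_derivative_at_within[OF dH])
    then show ?thesis unfolding zero .
  qed
  have contA: "continuous_on {0..2*pi} (\<lambda>\<theta>. EE \<theta> * of_real (GGd j \<theta>))"
    unfolding EE_def by (intro continuous_intros GGd_cont)
  define A where "A = integral {0..2*pi} (\<lambda>\<theta>. EE \<theta> * of_real (GGd j \<theta>))"
  have hA: "((\<lambda>\<theta>. EE \<theta> * of_real (GGd j \<theta>)) has_integral A) {0..2*pi}"
    unfolding A_def using contA integrable_continuous_interval integrable_integral by blast
  have "((\<lambda>\<theta>. (- \<i> * of_real s) * (cis (s * cos \<theta>) * ww j \<theta>)) has_integral (0 - A)) {0..2*pi}"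
    using has_integral_diff[OF hsum hA] by simp
  then have "((\<lambda>\<theta>. (1 / (- \<i> * of_real s)) * ((- \<i> * of_real s) * (cis (s * cos \<theta>) * ww j \<theta>))) has_integral
      (1 / (- \<i> * of_real s)) * (0 - A)) {0..2*pi}"
    by (rule has_integral_mult_right)
  moreover have "(1 / (- \<i> * of_real s)) * ((- \<i> * of_real s) * X) = X" for X
    using s by simp
  ultimately have "((\<lambda>\<theta>. cis (s * cos \<theta>) * ww j \<theta>) has_integral (1 / (- \<i> * of_real s)) * (0 - A)) {0..2*pi}"
    by simp
  then have "integral {0..2*pi} (\<lambda>\<theta>. cis (s * cos \<theta>) * ww j \<theta>) = (1 / (- \<i> * of_real s)) * (0 - A)"
    by (rule integral_unique)
  then have "cmod (integral {0..2*pi} (\<lambda>\<theta>. cis (s * cos \<theta>) * ww j \<theta>)) = cmod A / s"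
    using s by (simp add: norm_mult norm_divide)
  also have "cmod A \<le> KK j"
    unfolding A_def KK_def
  proof (rule integral_norm_bound_integral)
    show "(\<lambda>\<theta>. EE \<theta> * of_real (GGd j \<theta>)) integrable_on {0..2*pi}"
      using contA integrable_continuous_interval by blast
    show "(\<lambda>\<theta>. \<bar>GGd j \<theta>\<bar>) integrable_on {0..2*pi}"
      by (intro integrable_continuous_interval continuous_intros GGd_cont)
    show "norm (EE \<theta> * of_real (GGd j \<theta>)) \<le> \<bar>GGd j \<theta>\<bar>" for \<theta>
      by (simp add: EE_def norm_mult)
  qed
  then have "cmod A / s \<le> KK j / s" using s by (simp add: divide_right_mono)
  finally show ?thesis .
qed

end


theorem theorem2:
  fixes B C :: real and j :: nat
  assumes "B > 0" and "0 < C" and "C < sqrt 2 * B"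
  shows "((\<lambda>t. parity_expect B C j t) \<longlongrightarrow> 0) at_top"
proof -
  interpret J: jacobi B C using assms by unfold_locales auto
  define c where "c = J.KK j / (4*pi) / (4*B)"
  have bound: "norm (parity_expect B C j t) \<le> c / t" if t: "0 < t" for t
  proof -
    obtain S where S1: "(\<lambda>N. (-1)^j * ((2 * (\<i> * of_real t))^N / fact N) * vv B C j N j) sums S"
        and S2: "parity_expect B C j t = Re S"
      using J.parity_series[of j t] by blast
    define Jt where "Jt = integral {0..2*pi} (\<lambda>\<theta>. cis (4*B*t*cos \<theta>) * J.ww j \<theta>)"
    have "(\<lambda>N. (2 * (\<i> * of_real t))^N / fact N * vv B C j N j) sums (Jt / (4*pi))"
      unfolding Jt_def by (rule J.series_integral)
    then have "(\<lambda>N. (-1)^j * ((2 * (\<i> * of_real t))^N / fact N * vv B C j N j)) sums ((-1)^j * (Jt / (4*pi)))"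
      by (rule sums_mult)
    then have "(\<lambda>N. (-1)^j * ((2 * (\<i> * of_real t))^N / fact N) * vv B C j N j) sums ((-1)^j * (Jt / (4*pi)))"
      by (simp add: mult.assoc)
    then have SJ: "S = (-1)^j * (Jt / (4*pi))" using S1 sums_unique2 by blast
    have s: "0 < 4*B*t" using assms t by simp
    have "norm (parity_expect B C j t) \<le> cmod S" unfolding S2 using abs_Re_le_cmod[of S] by simp
    also have "\<dots> = cmod Jt / (4*pi)" by (simp add: SJ norm_mult norm_divide norm_power)
    also have "cmod Jt \<le> J.KK j / (4*B*t)" unfolding Jt_def by (rule J.decay[OF s])
    then have "cmod Jt / (4*pi) \<le> J.KK j / (4*B*t) / (4*pi)" by (rule divide_right_mono) simp
    also have "J.KK j / (4*B*t) / (4*pi) = c / t" by (simp add: c_def field_simps)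
    finally show ?thesis .
  qed
  show ?thesis
  proof (rule Lim_null_comparison)
    show "\<forall>\<^sub>F t in at_top. norm (parity_expect B C j t) \<le> c / t"
      using eventually_gt_at_top[of 0] by eventually_elim (rule bound)
    show "((\<lambda>t. c / t) \<longlongrightarrow> 0) at_top"
      by (rule tendsto_divide_0[OF tendsto_const filterlim_at_top_imp_at_infinity[OF filterlim_ident]])
  qed
qed


end
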